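(* Let $k>0$, let $n$ be a positive integer, $p$ a prime with $p\ge 9n^{2k+2}$, $N$ a positive integer, $T=(n-1)(n-2)/2+2(n-1)$, $v_1,v_2,K,M\in\mathbb{Z}_p^T$, and $D(x)=(2-x)v_1+(x-1)v_2+(x-1)(x-2)(K+xM)$. Let $\mathcal A:\mathbb{Z}_p^T\to\mathbb{Z}_p$ be any function with success probability $q=\mathbb{P}(\mathcal A(\mathbf U)=Z_{n-1}(\mathbf U;p))$ ($\mathbf U$ uniform on $\mathbb{Z}_p^T$) satisfying $q\ge 1/n^k$. Let $\mathcal S=\{(x,\mathcal A(D(x))):x=3,4,\dots,p\}$ and, for $f\in\mathbb{Z}_p[x]$, $G(f)=\{(x,f(x)):x=1,\dots,p\}$. Define $$\mathcal F=\{f\in\mathbb{Z}_p[x]:\deg(f)<n^2,\ |G(f)\cap\mathcal S|\ge (p-2)q/2\}.$$ Then $|\mathcal F|\le 3/q$; in particular $|\mathcal F|\le 3n^k$.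
   Context: Arithmetic is in $\mathbb{Z}_p$, elements of $\{1,\dots,p\}$ viewed as residues mod $p$. For $\boldsymbol\sigma\in\{-1,1\}^m$, $I_m(\boldsymbol\sigma)=|\{(i,j):1\le i<j\le m,\ \sigma_i\ne\sigma_j\}|$, $f(m,\boldsymbol\sigma)=\frac{m(m-1)}2-m-I_m(\boldsymbol\sigma)$; a vector in $\mathbb{Z}_p^{m(m-1)/2+2m}$ is read as $(\mathbf J,\mathbf B,\mathbf C)$ with $J_{ij}$ ($1\le i<j\le m$), $B_i$, $C_i$ ($i\le m$), and $Z_m(\mathbf J,\mathbf B,\mathbf C;p)=\sum_{\boldsymbol\sigma}2^{Nf(m,\boldsymbol\sigma)}\prod_{i:\sigma_i=-1}B_i\prod_{i:\sigma_i=+1}C_i\prod_{i<j:\sigma_i\ne\sigma_j}J_{ij}\pmod p$. *)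

theory Defs
  imports "HOL-Analysis.Analysis" "Berlekamp_Zassenhaus.Finite_Field"
begin

text \<open>Arithmetic in Z_p is modelled by the type 'p mod_ring with 'p :: prime_card,
  so p = CARD('p) is prime. A vector in Z_p^(m(m-1)/2+2m) is a triple (J,B,C)
  of coordinate functions, J i j for 1 <= i < j <= m, B i and C i for 1 <= i <= m,
  extended by 0 outside these index ranges.\<close>

type_synonym 'a vec3 = "(nat \<Rightarrow> nat \<Rightarrow> 'a) \<times> (nat \<Rightarrow> 'a) \<times> (nat \<Rightarrow> 'a)"

definition vecs :: "nat \<Rightarrow> ('a::zero) vec3 set" where
  "vecs m = {(J,B,C). (\<forall>i j. \<not>(1 \<le> i \<and> i < j \<and> j \<le> m) \<longrightarrow> J i j = 0)
                    \<and> (\<forall>i. \<not>(1 \<le> i \<and> i \<le> m) \<longrightarrow> B i = 0)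
                    \<and> (\<forall>i. \<not>(1 \<le> i \<and> i \<le> m) \<longrightarrow> C i = 0)}"

definition vadd :: "('a::plus) vec3 \<Rightarrow> 'a vec3 \<Rightarrow> 'a vec3" where
  "vadd u w = (case u of (J,B,C) \<Rightarrow> case w of (J',B',C') \<Rightarrow>
      (\<lambda>i j. J i j + J' i j, \<lambda>i. B i + B' i, \<lambda>i. C i + C' i))"

definition vscale :: "('a::times) \<Rightarrow> 'a vec3 \<Rightarrow> 'a vec3" where
  "vscale c u = (case u of (J,B,C) \<Rightarrow> (\<lambda>i j. c * J i j, \<lambda>i. c * B i, \<lambda>i. c * C i))"

definition Dcurve :: "('a::comm_ring_1) vec3 \<Rightarrow> 'a vec3 \<Rightarrow> 'a vec3 \<Rightarrow> 'a vec3 \<Rightarrow> 'a \<Rightarrow> 'a vec3" where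
  "Dcurve v1 v2 K M x = vadd (vadd (vscale (2 - x) v1) (vscale (x - 1) v2))
               (vscale ((x - 1) * (x - 2)) (vadd K (vscale x M)))"

definition Inv :: "nat \<Rightarrow> (nat \<Rightarrow> int) \<Rightarrow> nat" where
  "Inv m \<sigma> = card {(i,j). 1 \<le> i \<and> i < j \<and> j \<le> m \<and> \<sigma> i \<noteq> \<sigma> j}"

definition fexp :: "nat \<Rightarrow> (nat \<Rightarrow> int) \<Rightarrow> int" where
  "fexp m \<sigma> = int (m * (m - 1) div 2) - int m - int (Inv m \<sigma>)"

definition Zpart :: "nat \<Rightarrow> nat \<Rightarrow> ('a::field) vec3 \<Rightarrow> 'a" where
  "Zpart N m U = (case U of (J,B,C) \<Rightarrow>
     (\<Sum>\<sigma>\<in>PiE {1..m} (\<lambda>_. {-1, 1}).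
        (2::'a) powi (int N * fexp m \<sigma>)
        * (\<Prod>i\<in>{i\<in>{1..m}. \<sigma> i = -1}. B i)
        * (\<Prod>i\<in>{i\<in>{1..m}. \<sigma> i = 1}. C i)
        * (\<Prod>(i,j)\<in>{(i,j). 1 \<le> i \<and> i < j \<and> j \<le> m \<and> \<sigma> i \<noteq> \<sigma> j}. J i j)))"

end

theory Submission
  imports Defs
begin

lemma aux_lin: "2*(s::nat) \<le> 2*u + t1 \<Longrightarrow> uu + ii = xa + u \<Longrightarrow> ii \<le> cm \<Longrightarrow> t1 + 2*cm = t2 \<Longrightarrow> 2*(xa+s) \<le> 2*uu + t2"
  by presburger

lemma bonf:
  fixes X :: "'i \<Rightarrow> 'a set"
  assumes "finite I" "\<forall>i\<in>I. finite (X i)"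
    "\<forall>i\<in>I. \<forall>j\<in>I. i \<noteq> j \<longrightarrow> card (X i \<inter> X j) \<le> c"
  shows "2 * (\<Sum>i\<in>I. card (X i)) \<le> 2 * card (\<Union>i\<in>I. X i) + c * card I * (card I - 1)"
  using assms
proof (induction I rule: finite_induct)
  case empty
  then show ?case by simp
next
  case (insert a I)
  let ?U = "\<Union>i\<in>I. X i"
  have fU: "finite ?U" using insert by auto
  have fa: "finite (X a)" using insert by auto
  have IH: "2 * (\<Sum>i\<in>I. card (X i)) \<le> 2 * card ?U + c * card I * (card I - 1)"
    using insert by auto
  have un: "card (X a \<union> ?U) + card (X a \<inter> ?U) = card (X a) + card ?U"
    using card_Un_Int[OF fa fU] by simp
  have "X a \<inter> ?U = (\<Union>i\<in>I. X a \<inter> X i)" by blast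
  hence "card (X a \<inter> ?U) = card (\<Union>i\<in>I. X a \<inter> X i)" by simp
  also have "\<dots> \<le> (\<Sum>i\<in>I. card (X a \<inter> X i))" by (rule card_UN_le[OF insert(1)])
  also have "\<dots> \<le> (\<Sum>i\<in>I. c)"
  proof (rule sum_mono)
    fix i assume "i \<in> I"
    thus "card (X a \<inter> X i) \<le> c" using insert(2) insert(5) by (metis insertCI)
  qed
  also have "\<dots> = c * card I" by simp
  finally have int: "card (X a \<inter> ?U) \<le> c * card I" .
  have ci: "card (insert a I) = Suc (card I)" using insert(1,2) by simp
  have ar: "c * card I * (card I - 1) + 2 * (c * card I) = c * card (insert a I) * (card (insert a I) - 1)"
    unfolding ci by (cases "card I") (simp_all add: algebra_simps)
  have sm: "(\<Sum>i\<in>insert a I. card (X i)) = card (X a) + (\<Sum>i\<in>I. card (X i))"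
    using insert(1,2) by simp
  have "\<Union> (X ` insert a I) = X a \<union> ?U" by simp
  then show ?case unfolding sm using IH un int ar by (simp only:) (rule aux_lin)
qed
lemma graph_int:
  fixes f g :: "'a::field poly"
  assumes "f \<noteq> g" "degree f < d" "degree g < d"
  shows "card ({(a, poly f a) | a. a \<in> Q} \<inter> {(a, poly g a) | a. a \<in> Q} \<inter> S) \<le> d - 1"
proof -
  have ne: "f - g \<noteq> 0" using assms by simp
  have "{(a, poly f a) | a. a \<in> Q} \<inter> {(a, poly g a) | a. a \<in> Q} \<inter> S
        \<subseteq> (\<lambda>a. (a, poly f a)) ` {x. poly (f - g) x = 0}" by auto
  hence "card ({(a, poly f a) | a. a \<in> Q} \<inter> {(a, poly g a) | a. a \<in> Q} \<inter> S)
        \<le> card ((\<lambda>a. (a, poly f a)) ` {x. poly (f - g) x = 0})"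
    by (intro card_mono finite_imageI poly_roots_finite ne)
  also have "\<dots> \<le> card {x. poly (f - g) x = 0}" by (rule card_image_le[OF poly_roots_finite[OF ne]])
  also have "\<dots> \<le> degree (f - g)" by (rule card_poly_roots_bound[OF ne])
  also have "\<dots> \<le> d - 1" using degree_diff_le_max[of f g] assms by linarith
  finally show ?thesis .
qed

lemma real_bound:
  fixes q P L d :: real
  assumes "q > 0" "P > 0" "L > 3 / q" "L - 1 \<le> 3 / q" "d \<ge> 0" "q^2 * P \<ge> 9 * d"
    and "L * q * P \<le> 2 * P + d * L * (L - 1)"
  shows False
proof -
  have L0: "L > 0" using assms(1,3) by (smt (verit) divide_pos_pos)
  have "d * L * (L - 1) \<le> d * L * (3 / q)"
    using assms L0 by (intro mult_left_mono) auto
  also have "\<dots> = L * (3 * d) / q" by simp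
  also have "\<dots> \<le> L * (q^2 * P / 3) / q"
    using assms L0 by (intro divide_right_mono mult_left_mono) auto
  also have "\<dots> = L * q * P / 3" using assms(1) by (simp add: power2_eq_square field_simps)
  finally have "L * q * P \<le> 3 * P" using assms(7) by linarith
  hence "L * q \<le> 3" using assms(2) by simp
  moreover have "L * q > 3" using assms(1,3) by (simp add: field_simps)
  ultimately show False by simp
qed

theorem lemma4:
  fixes k :: real and n N :: nat
    and v1 v2 K M :: "('p::prime_card mod_ring) vec3"
    and A :: "'p mod_ring vec3 \<Rightarrow> 'p mod_ring"
  assumes "k > 0" and "n > 0" and "N > 0"
    and "real CARD('p) \<ge> 9 * real n powr (2 * k + 2)"
    and "v1 \<in> vecs (n - 1)" "v2 \<in> vecs (n - 1)" "K \<in> vecs (n - 1)" "M \<in> vecs (n - 1)"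
  defines "q \<equiv> real (card {U \<in> vecs (n - 1). A U = Zpart N (n - 1) U}) / real CARD('p) ^ ((n - 1) * (n - 2) div 2 + 2 * (n - 1))"
    and "S \<equiv> {(of_nat x :: 'p mod_ring, A (Dcurve v1 v2 K M (of_nat x))) | x. 3 \<le> x \<and> x \<le> CARD('p)}"
    and "G \<equiv> (\<lambda>f::'p mod_ring poly. {(of_nat x :: 'p mod_ring, poly f (of_nat x)) | x. 1 \<le> x \<and> x \<le> CARD('p)})"
  assumes "q \<ge> 1 / real n powr k"
  shows "card {f::'p mod_ring poly. degree f < n^2 \<and> real (card (G f \<inter> S)) \<ge> real (CARD('p) - 2) * q / 2}
           \<le> 3 / q
       \<and> card {f::'p mod_ring poly. degree f < n^2 \<and> real (card (G f \<inter> S)) \<ge> real (CARD('p) - 2) * q / 2}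
           \<le> 3 * real n powr k"
proof -
  define F where "F = {f::'p mod_ring poly. degree f < n^2 \<and> real (card (G f \<inter> S)) \<ge> real (CARD('p) - 2) * q / 2}"
  define p where "p = CARD('p)"
  define P where "P = real (p - 2)"
  have n1: "real n \<ge> 1" using assms(2) by simp
  have nk: "real n powr k > 0" using assms(2) by simp
  have q0: "q > 0"
  proof -
    have "1 / real n powr k > 0" using nk by simp
    thus ?thesis using assms(12) by linarith
  qed
  have npow: "real n powr (2 * k + 2) = (real n powr k)^2 * (real n)^2"
  proof -
    have e: "2 * k + 2 = (k + k) + (2::real)" by simp
    have b: "real n powr 2 = (real n)^2" using assms(2) by (simp add: powr_numeral)
    show ?thesis by (simp only: e powr_add b power2_eq_square)
  qed
  have nk1: "real n powr k \<ge> 1" using n1 assms(1) by (simp add: ge_one_powr_ge_zero)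
  have p9: "real p \<ge> 9" 
  proof -
    have "(real n powr k)^2 * (real n)^2 \<ge> 1 * 1"
      using nk1 n1 by (intro mult_mono) (auto simp: one_le_power)
    thus ?thesis using assms(4) npow p_def by linarith
  qed
  have PP: "P = real p - 2" using p9 P_def by simp
  have P0: "P > 0" using PP p9 by simp
  have q2: "q^2 \<ge> 1 / (real n powr k)^2"
  proof -
    have "(1 / real n powr k)^2 \<le> q^2" using assms(12) nk by (intro power_mono) auto
    thus ?thesis by (simp add: power_divide)
  qed
  have key: "q^2 * P \<ge> 9 * real (n^2 - 1)"
  proof -
    have "q^2 * P \<ge> 1 / (real n powr k)^2 * P" using q2 P0 by (intro mult_right_mono) auto
    moreover have "P \<ge> 9 * ((real n powr k)^2 * (real n)^2) - 2"
      using assms(4) npow PP p_def by linarith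
    moreover have "1 / (real n powr k)^2 * (9 * ((real n powr k)^2 * (real n)^2) - 2)
        = 9 * (real n)^2 - 2 / (real n powr k)^2" using nk by (simp add: field_simps)
    moreover have "2 / (real n powr k)^2 \<le> 2"
      using nk1 by (simp add: divide_le_eq one_le_power)
    moreover have "1 / (real n powr k)^2 * (9 * ((real n powr k)^2 * (real n)^2) - 2)
        \<le> 1 / (real n powr k)^2 * P" using nk
      by (intro mult_left_mono) (use calculation in auto)
    moreover have "real (n^2 - 1) = (real n)^2 - 1" using assms(2) by (simp add: of_nat_diff)
    ultimately show ?thesis by linarith
  qed
  have Sfin: "finite S" and Scard: "card S \<le> p - 2"
  proof -
    have "S = (\<lambda>x. (of_nat x :: 'p mod_ring, A (Dcurve v1 v2 K M (of_nat x)))) ` {3..p}"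
      unfolding S_def p_def by auto
    thus "finite S" "card S \<le> p - 2" using card_image_le[of "{3..p}"] by auto
  qed
  have c1: "real (card F) \<le> 3 / q"
  proof (rule ccontr)
    assume "\<not> ?thesis"
    hence big: "real (card F) > 3 / q" by simp
    define L where "L = nat (floor (3 / q)) + 1"
    have fl0: "\<lfloor>3/q\<rfloor> \<ge> 0" using q0 by simp
    have rL: "real L = of_int \<lfloor>3/q\<rfloor> + 1" unfolding L_def using fl0 by simp
    have Lgt: "real L > 3 / q" using rL floor_correct[of "3/q"] by simp
    have Lle: "real L - 1 \<le> 3 / q" using rL of_int_floor_le[of "3/q"] by simp
    have "L \<le> card F"
    proof -
      have "real (L - 1) \<le> 3 / q" using Lle L_def by simp
      hence "real (L - 1) < real (card F)" using big by linarith
      thus ?thesis using L_def by simp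
    qed
    then obtain T where T: "T \<subseteq> F" "card T = L" "finite T" by (rule obtain_subset_with_card_n)
    let ?X = "\<lambda>f. G f \<inter> S"
    have h1: "2 * (\<Sum>f\<in>T. card (?X f)) \<le> 2 * card (\<Union>f\<in>T. ?X f) + (n^2 - 1) * card T * (card T - 1)"
    proof (rule bonf)
      show "finite T" by fact
      show "\<forall>i\<in>T. finite (?X i)" using Sfin by auto
      show "\<forall>i\<in>T. \<forall>j\<in>T. i \<noteq> j \<longrightarrow> card (?X i \<inter> ?X j) \<le> n^2 - 1"
      proof (intro ballI impI)
        fix f g assume fg: "f \<in> T" "g \<in> T" "f \<noteq> g"
        have df: "degree f < n^2" "degree g < n^2" using fg T F_def by auto
        have e: "\<And>h. G h = {(a, poly h a) | a. a \<in> of_nat ` {1..CARD('p)}}"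
          unfolding G_def by auto
        have "?X f \<inter> ?X g = G f \<inter> G g \<inter> S" by auto
        thus "card (?X f \<inter> ?X g) \<le> n^2 - 1"
          unfolding e using graph_int[OF fg(3) df] by simp
      qed
    qed
    have h2: "card (\<Union>f\<in>T. ?X f) \<le> p - 2"
      using Scard card_mono[OF Sfin, of "\<Union>f\<in>T. ?X f"] by auto
    have ineq: "2 * (\<Sum>f\<in>T. card (?X f)) \<le> 2 * (p - 2) + (n^2 - 1) * L * (L - 1)"
      using h1 h2 unfolding T(2) by linarith
    have "(\<Sum>f\<in>T. real (card (?X f))) \<ge> (\<Sum>f\<in>T. P * q / 2)"
      by (rule sum_mono) (use T in \<open>auto simp: F_def P_def p_def\<close>)
    hence "(\<Sum>f\<in>T. real (card (?X f))) \<ge> real L * (P * q / 2)" using T by simp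
    moreover have "2 * (\<Sum>f\<in>T. real (card (?X f))) \<le> 2 * P + real (n^2 - 1) * real L * (real L - 1)"
    proof -
      have "real (2 * (\<Sum>f\<in>T. card (?X f))) \<le> real (2 * (p - 2) + (n^2 - 1) * L * (L - 1))"
        using ineq by linarith
      moreover have "real (L - 1) = real L - 1" using L_def by simp
      ultimately show ?thesis unfolding P_def by (simp add: of_nat_sum)
    qed
    ultimately have "real L * q * P \<le> 2 * P + real (n^2 - 1) * real L * (real L - 1)"
      by (simp add: algebra_simps)
    thus False using real_bound[OF q0 P0 Lgt Lle _ key] by simp
  qed
  have "3 / q \<le> 3 * real n powr k"
  proof -
    have "real n powr k * q \<ge> real n powr k * (1 / real n powr k)"
      using assms(12) nk by (intro mult_left_mono) auto
    hence "real n powr k * q \<ge> 1" using nk by simp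
    hence "1 / q \<le> real n powr k" using q0 by (simp add: divide_le_eq mult.commute)
    thus ?thesis by simp
  qed
  thus ?thesis using c1 unfolding F_def by linarith
qed

end
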